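(* Let $h\in D$ be a fixed energy level and let $z_0\in\Gamma_0\cap M_h$, where $M_h=\{H_0=h\}$. Then: (i) the angle mismatch $\theta^s(z_0)-\theta^u(z_0)$ is a constant depending only on $h$ (denote it $\theta^s(h)-\theta^u(h)$); (ii) the scattering map $\sigma_0$ associated to $\Gamma_0$ is given, in the action-angle coordinates $(I,\theta)$ on $\Lambda_0$, by $\sigma_0(I,\theta)=(I,\theta+\Delta(I))$, where $\Delta(I)=\theta^s(h)-\theta^u(h)$ for $I=I_h$.
   Context: $(M,\Omega)$ is a real-analytic symplectic manifold; $H_0$ real-analytic with Hamiltonian flow $\Phi^t_0$. There is a saddle-center equilibrium $L$ and a family of Lyapunov periodic orbits $\lambda_0(h)\subset\{H_0=h\}$; $\Lambda_0=\bigcup_{h\in D}\lambda_0(h)$ ($D$ a closed interval) is a 2-dimensional normally hyperbolic invariant manifold with boundary, parametrized by symplectic action-angle coordinates $(I,\theta)$, with $\lambda_0(h)=\{I=I_h\}$ and the flow on each $\lambda_0(h)$ a rigid rotation in $\theta$. For $z$ in the unstable (resp. stable) manifold $W^u(\Lambda_0)$ (resp. $W^s(\Lambda_0)$), $z^-=\Omega^-(z)$ (resp. $z^+=\Omega^+(z)$) is the point of $\Lambda_0$ whose unstable (resp. stable) fiber contains $z$; these projections are equivariant: $\Omega^\pm(\Phi^t_0 z)=\Phi^t_0(\Omega^\pm z)$. $W^u(\Lambda_0)$ and $W^s(\Lambda_0)$ intersect transversally along a homoclinic channel $\Gamma_0$: a submanifold with $T_z\Gamma_0=T_zW^u\cap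 T_zW^s$, $T_zM=T_z\Gamma_0\oplus T_zW^u(z^-)\oplus T_zW^s(z^+)$, on which $\Omega^\pm$ are diffeomorphisms onto open sets $U^\pm\subset\Lambda_0$; the scattering map is $\sigma_0=\Omega^+\circ(\Omega^-|_{\Gamma_0})^{-1}:U^-\to U^+$, and for each $h$, $\Gamma_0\cap M_h$ consists of points $\Phi^t_0(z_0)$, $t$ in an interval containing $0$. Coordinates: $(I^u,\theta^u,y^u,x^u)$ are symplectic coordinates on a neighborhood of $W^u(\Lambda_0)$ and $(I^s,\theta^s,y^s,x^s)$ on a neighborhood of $W^s(\Lambda_0)$, both coinciding with the normal form coordinates $(I,\theta,y,x)$ near $\Lambda_0$ (where $\Lambda_0=\{x=y=0\}$ and $(I,\theta)$ restrict to the action-angle coordinates), with $I^u(z)=I^u(z^-)$, $\theta^u(z)=\theta^u(z^-)$ for $z\in W^u(\Lambda_0)$ and $I^s(z)=I^s(z^+)$, $\theta^s(z)=\theta^s(z^+)$ for $z\in W^s(\Lambda_0)$. *)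

theory Defs
  imports "HOL-Analysis.Analysis"
begin

definition angle_eq :: "real \<Rightarrow> real \<Rightarrow> bool" where
  "angle_eq x y \<longleftrightarrow> (\<exists>k::int. x - y = 2 * pi * of_int k)"

definition Ws_fib :: "(real \<Rightarrow> 'm::metric_space \<Rightarrow> 'm) \<Rightarrow> 'm \<Rightarrow> 'm set" where
  "Ws_fib Phi p = {z. ((\<lambda>t. dist (Phi t z) (Phi t p)) \<longlongrightarrow> 0) at_top}"

definition Wu_fib :: "(real \<Rightarrow> 'm::metric_space \<Rightarrow> 'm) \<Rightarrow> 'm \<Rightarrow> 'm set" where
  "Wu_fib Phi p = {z. ((\<lambda>t. dist (Phi t z) (Phi t p)) \<longlongrightarrow> 0) at_bot}"

definition Ws_set :: "(real \<Rightarrow> 'm::metric_space \<Rightarrow> 'm) \<Rightarrow> 'm set \<Rightarrow> 'm set" where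
  "Ws_set Phi L = (\<Union>p\<in>L. Ws_fib Phi p)"

definition Wu_set :: "(real \<Rightarrow> 'm::metric_space \<Rightarrow> 'm) \<Rightarrow> 'm set \<Rightarrow> 'm set" where
  "Wu_set Phi L = (\<Union>p\<in>L. Wu_fib Phi p)"

definition Omega_plus :: "(real \<Rightarrow> 'm::metric_space \<Rightarrow> 'm) \<Rightarrow> 'm set \<Rightarrow> 'm \<Rightarrow> 'm" where
  "Omega_plus Phi L z = (THE p. p \<in> L \<and> z \<in> Ws_fib Phi p)"

definition Omega_minus :: "(real \<Rightarrow> 'm::metric_space \<Rightarrow> 'm) \<Rightarrow> 'm set \<Rightarrow> 'm \<Rightarrow> 'm" where
  "Omega_minus Phi L z = (THE p. p \<in> L \<and> z \<in> Wu_fib Phi p)"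

definition scattering :: "(real \<Rightarrow> 'm::metric_space \<Rightarrow> 'm) \<Rightarrow> 'm set \<Rightarrow> 'm set \<Rightarrow> 'm \<Rightarrow> 'm" where
  "scattering Phi L G = Omega_plus Phi L \<circ> inv_into G (Omega_minus Phi L)"

end

theory Submission
  imports Defs
begin

lemma shift_bot: "filterlim (\<lambda>s::real. s + t) at_bot at_bot"
  unfolding filterlim_at_bot eventually_at_bot_linorder
  by (metis add.commute le_diff_eq)

lemma shift_top: "filterlim (\<lambda>s::real. s + t) at_top at_top"
  unfolding filterlim_at_top eventually_at_top_linorder
  by (metis add.commute diff_le_eq)

lemma Wu_equiv:
  assumes fa: "\<forall>s t z. Phi (s + t) z = Phi s (Phi t z)"
    and z: "z \<in> Wu_fib Phi p"
  shows "Phi t z \<in> Wu_fib Phi (Phi t p)"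
proof -
  have "((\<lambda>s. dist (Phi s z) (Phi s p)) \<longlongrightarrow> 0) at_bot" using z by (simp add: Wu_fib_def)
  from filterlim_compose[OF this shift_bot[of t]]
  show ?thesis unfolding Wu_fib_def using fa by (simp add: o_def)
qed

lemma Ws_equiv:
  assumes fa: "\<forall>s t z. Phi (s + t) z = Phi s (Phi t z)"
    and z: "z \<in> Ws_fib Phi p"
  shows "Phi t z \<in> Ws_fib Phi (Phi t p)"
proof -
  have "((\<lambda>s. dist (Phi s z) (Phi s p)) \<longlongrightarrow> 0) at_top" using z by (simp add: Ws_fib_def)
  from filterlim_compose[OF this shift_top[of t]]
  show ?thesis unfolding Ws_fib_def using fa by (simp add: o_def)
qed

lemma energy_gen:
  fixes Phi :: "real \<Rightarrow> 'm::metric_space \<Rightarrow> 'm" and H :: "'m \<Rightarrow> real"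
  assumes Hc: "continuous_on UNIV H" and Hi: "\<forall>t z. H (Phi t z) = H z"
    and K: "compact K" "K \<subseteq> {w. H w = c}" "\<forall>t. Phi t p \<in> K"
    and lim: "((\<lambda>s. dist (Phi s z) (Phi s p)) \<longlongrightarrow> 0) F"
    and F: "F = at_bot \<or> F = at_top"
  shows "H z = c"
proof -
  obtain g :: "nat \<Rightarrow> real" where g: "filterlim g F sequentially"
  proof (cases "F = at_bot")
    case True
    then show ?thesis using filterlim_real_sequentially
      by (intro that[of "\<lambda>n. - real n"]) (simp add: filterlim_uminus_at_bot)
  next
    case False
    then show ?thesis using F filterlim_real_sequentially by (intro that[of real]) simp
  qed
  have "seq_compact K" using K(1) by (rule compact_imp_seq_compact)
  then obtain l r where l: "l \<in> K" "strict_mono r" "((\<lambda>n. Phi (g n) p) \<circ> r) \<longlonglongrightarrow> l"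
    using seq_compactE[of K "\<lambda>n. Phi (g n) p"] K(3) by blast
  have gr: "filterlim (g \<circ> r) F sequentially"
    using filterlim_compose[OF g filterlim_subseq[OF l(2)]] by (simp add: o_def)
  have d: "(\<lambda>n. dist (Phi ((g \<circ> r) n) z) (Phi ((g \<circ> r) n) p)) \<longlonglongrightarrow> 0"
    using filterlim_compose[OF lim gr] by (simp add: o_def)
  define A where "A = (\<lambda>n. Phi ((g \<circ> r) n) z)"
  define B where "B = (\<lambda>n. Phi ((g \<circ> r) n) p)"
  have B: "B \<longlonglongrightarrow> l" using l(3) unfolding B_def by (simp add: o_def)
  have B': "(\<lambda>n. dist (B n) l) \<longlonglongrightarrow> 0" using B by (rule tendsto_dist_iff[THEN iffD1])
  have d': "(\<lambda>n. dist (A n) (B n)) \<longlonglongrightarrow> 0" using d unfolding A_def B_def .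
  have S: "(\<lambda>n. dist (A n) (B n) + dist (B n) l) \<longlonglongrightarrow> 0 + 0"
    by (rule tendsto_add[OF d' B'])
  have e1: "\<forall>\<^sub>F n in sequentially. (\<lambda>_. 0::real) n \<le> dist (A n) l" by simp
  have e2: "\<forall>\<^sub>F n in sequentially. dist (A n) l \<le> dist (A n) (B n) + dist (B n) l"
    by (simp add: dist_triangle)
  have "(\<lambda>n. dist (A n) l) \<longlonglongrightarrow> 0"
    using tendsto_sandwich[OF e1 e2 tendsto_const] S by simp
  then have zl: "A \<longlonglongrightarrow> l" by (rule tendsto_dist_iff[THEN iffD2])
  have "(\<lambda>n. H (Phi ((g \<circ> r) n) z)) \<longlonglongrightarrow> H l"
    using continuous_on_tendsto_compose[OF Hc zl] by (simp add: o_def A_def)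
  then have "(\<lambda>n. H z) \<longlonglongrightarrow> H l" using Hi by simp
  then have "H z = H l" by (simp add: LIMSEQ_const_iff)
  then show ?thesis using l(1) K(2) by auto
qed


lemma ang_refl: "angle_eq x x"
  unfolding angle_eq_def by (rule exI[of _ 0]) simp

lemma ang_sym: "angle_eq x y \<Longrightarrow> angle_eq y x"
  unfolding angle_eq_def by (metis minus_diff_eq mult_minus_right of_int_minus)

lemma ang_trans: "angle_eq x y \<Longrightarrow> angle_eq y z \<Longrightarrow> angle_eq x z"
proof -
  assume "angle_eq x y" "angle_eq y z"
  then obtain k l :: int where "x - y = 2 * pi * k" "y - z = 2 * pi * l" unfolding angle_eq_def by blast
  then have "x - z = 2 * pi * of_int (k + l)" by (simp add: algebra_simps)
  then show ?thesis unfolding angle_eq_def by blast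
qed

lemma ang_diff: "angle_eq a b \<Longrightarrow> angle_eq c d \<Longrightarrow> angle_eq (a - c) (b - d)"
proof -
  assume "angle_eq a b" "angle_eq c d"
  then obtain k l :: int where "a - b = 2 * pi * k" "c - d = 2 * pi * l" unfolding angle_eq_def by blast
  then have "(a - c) - (b - d) = 2 * pi * of_int (k - l)" by (simp add: algebra_simps)
  then show ?thesis unfolding angle_eq_def by blast
qed

lemma ang_add: "angle_eq a b \<Longrightarrow> angle_eq c d \<Longrightarrow> angle_eq (a + c) (b + d)"
proof -
  assume "angle_eq a b" "angle_eq c d"
  then obtain k l :: int where "a - b = 2 * pi * k" "c - d = 2 * pi * l" unfolding angle_eq_def by blast
  then have "(a + c) - (b + d) = 2 * pi * of_int (k + l)" by (simp add: algebra_simps)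
  then show ?thesis unfolding angle_eq_def by blast
qed

theorem proposition4p5:
  fixes Phi :: "real \<Rightarrow> 'm::metric_space \<Rightarrow> 'm"
    and H :: "'m \<Rightarrow> real"
    and Lam :: "'m set" and lam :: "real \<Rightarrow> 'm set"
    and D :: "real set" and a b :: real
    and I th :: "'m \<Rightarrow> real" and Ih omega :: "real \<Rightarrow> real"
    and Gamma :: "'m set" and thu ths :: "'m \<Rightarrow> real"
    and h :: real and z0 :: 'm
  assumes flow0: "\<forall>z. Phi 0 z = z"
    and flow_add: "\<forall>s t z. Phi (s + t) z = Phi s (Phi t z)"
    and flow_cont: "\<forall>t. continuous_on UNIV (Phi t)"
    and H_cont: "continuous_on UNIV H"
    and H_inv: "\<forall>t z. H (Phi t z) = H z"
    and D_def: "D = {a..b}" and ab: "a < b"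
    and lam_energy: "\<forall>h'\<in>D. lam h' \<subseteq> {z. H z = h'}"
    and lam_nonempty: "\<forall>h'\<in>D. lam h' \<noteq> {}"
    and lam_compact: "\<forall>h'\<in>D. compact (lam h')"
    and lam_invariant: "\<forall>h'\<in>D. \<forall>t. Phi t ` lam h' \<subseteq> lam h'"
    and Lam_def: "Lam = (\<Union>h'\<in>D. lam h')"
    and Lam_compact: "compact Lam"
    and lam_action: "\<forall>h'\<in>D. lam h' = {p \<in> Lam. I p = Ih h'}"
    and aa_inj: "\<forall>p\<in>Lam. \<forall>q\<in>Lam. I p = I q \<and> angle_eq (th p) (th q) \<longrightarrow> p = q"
    and aa_surj: "\<forall>h'\<in>D. \<forall>\<theta>. \<exists>p\<in>lam h'. angle_eq (th p) \<theta>"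
    and rotation: "\<forall>h'\<in>D. \<forall>p\<in>lam h'. \<forall>t. angle_eq (th (Phi t p)) (th p + omega h' * t)"
    and fib_s_disj: "\<forall>p\<in>Lam. \<forall>q\<in>Lam. Ws_fib Phi p \<inter> Ws_fib Phi q \<noteq> {} \<longrightarrow> p = q"
    and fib_u_disj: "\<forall>p\<in>Lam. \<forall>q\<in>Lam. Wu_fib Phi p \<inter> Wu_fib Phi q \<noteq> {} \<longrightarrow> p = q"
    and Gamma_sub: "Gamma \<subseteq> Wu_set Phi Lam \<inter> Ws_set Phi Lam"
    and Gamma_inj: "inj_on (Omega_minus Phi Lam) Gamma"
    and Gamma_orbit: "\<forall>h'\<in>D. \<forall>z\<in>Gamma \<inter> {w. H w = h'}. \<exists>J. is_interval J \<and> 0 \<in> J \<and>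
                        Gamma \<inter> {w. H w = h'} = (\<lambda>t. Phi t z) ` J"
    and thu_def: "\<forall>z\<in>Wu_set Phi Lam. thu z = th (Omega_minus Phi Lam z)"
    and ths_def: "\<forall>z\<in>Ws_set Phi Lam. ths z = th (Omega_plus Phi Lam z)"
    and h: "h \<in> D"
    and z0: "z0 \<in> Gamma" "H z0 = h"
  shows "(\<forall>z\<in>Gamma \<inter> {w. H w = h}. angle_eq (ths z - thu z) (ths z0 - thu z0))
       \<and> (\<forall>p\<in>Omega_minus Phi Lam ` Gamma. I p = Ih h \<longrightarrow>
            I (scattering Phi Lam Gamma p) = Ih h
          \<and> angle_eq (th (scattering Phi Lam Gamma p)) (th p + (ths z0 - thu z0)))"
proof -
  have Omu: "Omega_minus Phi Lam z \<in> Lam \<and> z \<in> Wu_fib Phi (Omega_minus Phi Lam z)"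
    if "z \<in> Wu_set Phi Lam" for z
  proof -
    have "\<exists>!p. p \<in> Lam \<and> z \<in> Wu_fib Phi p" using that fib_u_disj unfolding Wu_set_def by blast
    then show ?thesis unfolding Omega_minus_def by (rule theI')
  qed
  have Omu_eq: "Omega_minus Phi Lam z = p" if "p \<in> Lam" "z \<in> Wu_fib Phi p" for z p
    unfolding Omega_minus_def using that fib_u_disj by (intro the_equality) blast+
  have Omp: "Omega_plus Phi Lam z \<in> Lam \<and> z \<in> Ws_fib Phi (Omega_plus Phi Lam z)"
    if "z \<in> Ws_set Phi Lam" for z
  proof -
    have "\<exists>!p. p \<in> Lam \<and> z \<in> Ws_fib Phi p" using that fib_s_disj unfolding Ws_set_def by blast
    then show ?thesis unfolding Omega_plus_def by (rule theI')
  qed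
  have Omp_eq: "Omega_plus Phi Lam z = p" if "p \<in> Lam" "z \<in> Ws_fib Phi p" for z p
    unfolding Omega_plus_def using that fib_s_disj by (intro the_equality) blast+
  have lamH: "\<exists>h'\<in>D. p \<in> lam h' \<and> H p = h'" if "p \<in> Lam" for p
    using that lam_energy unfolding Lam_def by blast
  have inv: "Phi t p \<in> lam h'" if "p \<in> lam h'" "h' \<in> D" for p t h'
    using that lam_invariant by blast
  have inLam: "Phi t p \<in> Lam" if "p \<in> Lam" for p t
    using lamH[OF that] inv Lam_def by blast
  have en_u: "H z = H p" if pz: "p \<in> Lam" "z \<in> Wu_fib Phi p" for z p
  proof -
    obtain h' where h': "h' \<in> D" "p \<in> lam h'" "H p = h'" using lamH[OF pz(1)] by blast
    have "H z = h'"
      by (rule energy_gen[OF H_cont H_inv, of "lam h'" h' p z at_bot])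
        (use h' lam_compact lam_energy inv pz(2) in \<open>auto simp: Wu_fib_def\<close>)
    then show ?thesis using h' by simp
  qed
  have en_s: "H z = H p" if pz: "p \<in> Lam" "z \<in> Ws_fib Phi p" for z p
  proof -
    obtain h' where h': "h' \<in> D" "p \<in> lam h'" "H p = h'" using lamH[OF pz(1)] by blast
    have "H z = h'"
      by (rule energy_gen[OF H_cont H_inv, of "lam h'" h' p z at_top])
        (use h' lam_compact lam_energy inv pz(2) in \<open>auto simp: Ws_fib_def\<close>)
    then show ?thesis using h' by simp
  qed
  have inlam: "p \<in> lam (H p)" "H p \<in> D" if "p \<in> Lam" for p
    using lamH[OF that] by auto
  define p0 where "p0 = Omega_minus Phi Lam z0"
  define q0 where "q0 = Omega_plus Phi Lam z0"
  have z0u: "z0 \<in> Wu_set Phi Lam" and z0s: "z0 \<in> Ws_set Phi Lam" using z0 Gamma_sub by auto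
  have p0: "p0 \<in> Lam" "z0 \<in> Wu_fib Phi p0" using Omu[OF z0u] p0_def by auto
  have q0: "q0 \<in> Lam" "z0 \<in> Ws_fib Phi q0" using Omp[OF z0s] q0_def by auto
  have Hp0: "H p0 = h" using en_u[OF p0] z0 by simp
  have Hq0: "H q0 = h" using en_s[OF q0] z0 by simp
  have p0l: "p0 \<in> lam h" using inlam[OF p0(1)] Hp0 by simp
  have q0l: "q0 \<in> lam h" using inlam[OF q0(1)] Hq0 by simp
  have part1: "angle_eq (ths z - thu z) (ths z0 - thu z0)" if z: "z \<in> Gamma" "H z = h" for z
  proof -
    obtain J where "Gamma \<inter> {w. H w = h} = (\<lambda>t. Phi t z0) ` J"
      using Gamma_orbit h z0 by blast
    then obtain t where t: "z = Phi t z0" using z by blast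
    have zu: "z \<in> Wu_set Phi Lam" and zs: "z \<in> Ws_set Phi Lam" using z Gamma_sub by auto
    have "Omega_minus Phi Lam z = Phi t p0"
      using Omu_eq[OF inLam[OF p0(1)] Wu_equiv[OF flow_add p0(2)]] t by simp
    then have u: "thu z = th (Phi t p0)" using thu_def zu by simp
    have "Omega_plus Phi Lam z = Phi t q0"
      using Omp_eq[OF inLam[OF q0(1)] Ws_equiv[OF flow_add q0(2)]] t by simp
    then have s: "ths z = th (Phi t q0)" using ths_def zs by simp
    have "angle_eq (ths z - thu z) ((th q0 + omega h * t) - (th p0 + omega h * t))"
      unfolding u s using rotation h p0l q0l by (intro ang_diff) auto
    moreover have "thu z0 = th p0" "ths z0 = th q0" using thu_def ths_def z0u z0s p0_def q0_def by auto
    ultimately show ?thesis by simp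
  qed
  have part2: "I (scattering Phi Lam Gamma p) = Ih h
          \<and> angle_eq (th (scattering Phi Lam Gamma p)) (th p + (ths z0 - thu z0))"
    if p: "p \<in> Omega_minus Phi Lam ` Gamma" "I p = Ih h" for p
  proof -
    obtain z where z: "z \<in> Gamma" "p = Omega_minus Phi Lam z" using p by blast
    have zu: "z \<in> Wu_set Phi Lam" and zs: "z \<in> Ws_set Phi Lam" using z Gamma_sub by auto
    have "inv_into Gamma (Omega_minus Phi Lam) p = z"
      using z Gamma_inj by (simp add: inv_into_f_f)
    then have sc: "scattering Phi Lam Gamma p = Omega_plus Phi Lam z"
      by (simp add: scattering_def)
    have pL: "p \<in> Lam" "z \<in> Wu_fib Phi p" using Omu[OF zu] z by auto
    have "p \<in> lam h" using lam_action h pL p(2) by blast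
    then have "H p = h" using lam_energy h by blast
    then have Hz: "H z = h" using en_u[OF pL] by simp
    define q where "q = Omega_plus Phi Lam z"
    have q: "q \<in> Lam" "z \<in> Ws_fib Phi q" using Omp[OF zs] q_def by auto
    have "H q = h" using en_s[OF q] Hz by simp
    then have "q \<in> lam h" using inlam[OF q(1)] by simp
    then have Iq: "I q = Ih h" using lam_action h by blast
    have "angle_eq (ths z - thu z) (ths z0 - thu z0)" using part1 z(1) Hz by blast
    moreover have "ths z = th q" "thu z = th p" using ths_def thu_def zs zu q_def z by auto
    ultimately have "angle_eq (th p + (th q - th p)) (th p + (ths z0 - thu z0))"
      by (intro ang_add ang_refl) auto
    then show ?thesis using sc Iq q_def by simp
  qed
  show ?thesis using part1 part2 by blast
qed

end
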